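(* Suppose that the natural action of $G$ on $\mathcal M(S_G(M))$ makes it a definable $G$-flow, and that $G$ is definably strongly amenable. Then $G$ is definably amenable.
   Context: $M$ is a first-order structure, $G$ a group definable in $M$, and all types in $S_G(M)$ are definable (for each $p$ and formula $\varphi(x,y)$, $\{m:\varphi(x,m)\in p\}$ is definable). $\mathcal M(S_G(M))$ is the space of Keisler measures (finitely additive probability measures on the Boolean algebra $B_G(M)$ of $M$-definable subsets of $G$), a closed subset of $[0,1]^{B_G(M)}$ with the product topology, with $G$ acting by $(g\mu)(X)=\mu(g^{-1}X)$. A map $f:G\to C$ to a compact Hausdorff space is definable if for any disjoint closed $C_1,C_2$ the preimages are separated by a definable subset of $G$. A $G$-flow (action by homeomorphisms on a compact Hausdorff space) is definable if each orbit map $g\mapsto gx$ is definable; minimal if no proper nonempty closed invariant subset; proximal if for all $x,y$ there is a net $(g_i)$ with $\lim g_ix=\lim g_iy$. $G$ is definably strongly amenable if every minimal definable proximal $G$-flow is a single point, and definably amenable if there is a $G$-invariant Keisler measure on $G$ over $M$. *)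

theory Defs
  imports "HOL-Analysis.Analysis" "HOL-Algebra.Group"
begin

text \<open>A first-order structure M (universe = type 'm) is presented by the
family S n of its definable (with parameters) subsets of M^n, where tuples are
lists of length n.  These are the axioms of a "structure on M" in the sense of
van den Dries, plus parameters (singletons definable).\<close>

definition fo_structure :: "(nat \<Rightarrow> 'm list set set) \<Rightarrow> bool" where
  "fo_structure S \<longleftrightarrow>
     (\<forall>n. S n \<subseteq> Pow {x. length x = n}) \<and>
     (\<forall>n. {x. length x = n} \<in> S n) \<and>
     (\<forall>n. \<forall>A\<in>S n. {x. length x = n} - A \<in> S n) \<and>
     (\<forall>n. \<forall>A\<in>S n. \<forall>B\<in>S n. A \<union> B \<in> S n) \<and>
     (\<forall>n. \<forall>A\<in>S n. {x @ [a] |x a. x \<in> A} \<in> S (Suc n)) \<and>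
     (\<forall>n. \<forall>A\<in>S n. {a # x |a x. x \<in> A} \<in> S (Suc n)) \<and>
     (\<forall>n\<ge>1. {x. length x = n \<and> x ! 0 = x ! (n - 1)} \<in> S n) \<and>
     (\<forall>n. \<forall>A\<in>S (Suc n). butlast ` A \<in> S n) \<and>
     (\<forall>a. {[a]} \<in> S 1)"

definition definable_group :: "(nat \<Rightarrow> 'm list set set) \<Rightarrow> nat \<Rightarrow> 'm list monoid \<Rightarrow> bool" where
  "definable_group S k G \<longleftrightarrow> group G \<and> carrier G \<in> S k \<and>
     {x @ y @ (x \<otimes>\<^bsub>G\<^esub> y) |x y. x \<in> carrier G \<and> y \<in> carrier G} \<in> S (3 * k)"

definition defsubG :: "(nat \<Rightarrow> 'm list set set) \<Rightarrow> nat \<Rightarrow> 'm list monoid \<Rightarrow> 'm list set set" where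
  "defsubG S k G = {A \<in> S k. A \<subseteq> carrier G}"

text \<open>S_G(M): complete types over M concentrating on G = ultrafilters of B_G(M).\<close>

definition typeG :: "(nat \<Rightarrow> 'm list set set) \<Rightarrow> nat \<Rightarrow> 'm list monoid \<Rightarrow> 'm list set set \<Rightarrow> bool" where
  "typeG S k G p \<longleftrightarrow> p \<subseteq> defsubG S k G \<and> carrier G \<in> p \<and> {} \<notin> p \<and>
     (\<forall>A\<in>p. \<forall>B\<in>p. A \<inter> B \<in> p) \<and>
     (\<forall>A\<in>p. \<forall>B\<in>defsubG S k G. A \<subseteq> B \<longrightarrow> B \<in> p) \<and>
     (\<forall>A\<in>defsubG S k G. A \<in> p \<or> carrier G - A \<in> p)"

definition definable_type :: "(nat \<Rightarrow> 'm list set set) \<Rightarrow> nat \<Rightarrow> 'm list monoid \<Rightarrow> 'm list set set \<Rightarrow> bool" where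
  "definable_type S k G p \<longleftrightarrow>
     (\<forall>n. \<forall>\<phi>\<in>S (k + n). {m. length m = n \<and> {x \<in> carrier G. x @ m \<in> \<phi>} \<in> p} \<in> S n)"

definition all_types_definable :: "(nat \<Rightarrow> 'm list set set) \<Rightarrow> nat \<Rightarrow> 'm list monoid \<Rightarrow> bool" where
  "all_types_definable S k G \<longleftrightarrow> (\<forall>p. typeG S k G p \<longrightarrow> definable_type S k G p)"

text \<open>A Keisler measure is a point of [0,1]^B_G(M) (a function on B_G(M), extended
by undefined outside it) which is a finitely additive probability measure.\<close>

definition keisler :: "(nat \<Rightarrow> 'm list set set) \<Rightarrow> nat \<Rightarrow> 'm list monoid \<Rightarrow> ('m list set \<Rightarrow> real) \<Rightarrow> bool" where
  "keisler S k G \<mu> \<longleftrightarrow> \<mu> \<in> extensional (defsubG S k G) \<and> \<mu> (carrier G) = 1 \<and>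
     (\<forall>A\<in>defsubG S k G. 0 \<le> \<mu> A) \<and>
     (\<forall>A\<in>defsubG S k G. \<forall>B\<in>defsubG S k G. A \<inter> B = {} \<longrightarrow> \<mu> (A \<union> B) = \<mu> A + \<mu> B)"

definition KM_top :: "(nat \<Rightarrow> 'm list set set) \<Rightarrow> nat \<Rightarrow> 'm list monoid \<Rightarrow> ('m list set \<Rightarrow> real) topology" where
  "KM_top S k G = subtopology (product_topology (\<lambda>_. top_of_set {0..1}) (defsubG S k G))
                              {\<mu>. keisler S k G \<mu>}"

definition KM_act :: "(nat \<Rightarrow> 'm list set set) \<Rightarrow> nat \<Rightarrow> 'm list monoid \<Rightarrow> 'm list \<Rightarrow> ('m list set \<Rightarrow> real) \<Rightarrow> ('m list set \<Rightarrow> real)" where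
  "KM_act S k G g \<mu> = (\<lambda>X. if X \<in> defsubG S k G then \<mu> ((\<lambda>x. inv\<^bsub>G\<^esub> g \<otimes>\<^bsub>G\<^esub> x) ` X) else undefined)"

definition G_flow :: "('g, 'b) monoid_scheme \<Rightarrow> 'x topology \<Rightarrow> ('g \<Rightarrow> 'x \<Rightarrow> 'x) \<Rightarrow> bool" where
  "G_flow G T act \<longleftrightarrow> compact_space T \<and> Hausdorff_space T \<and>
     (\<forall>g\<in>carrier G. continuous_map T T (act g)) \<and>
     (\<forall>x\<in>topspace T. act \<one>\<^bsub>G\<^esub> x = x) \<and>
     (\<forall>g\<in>carrier G. \<forall>h\<in>carrier G. \<forall>x\<in>topspace T. act (g \<otimes>\<^bsub>G\<^esub> h) x = act g (act h x))"

definition definable_map :: "(nat \<Rightarrow> 'm list set set) \<Rightarrow> nat \<Rightarrow> 'm list monoid \<Rightarrow> 'x topology \<Rightarrow> ('m list \<Rightarrow> 'x) \<Rightarrow> bool" where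
  "definable_map S k G T f \<longleftrightarrow>
     (\<forall>C1 C2. closedin T C1 \<and> closedin T C2 \<and> C1 \<inter> C2 = {} \<longrightarrow>
        (\<exists>D\<in>defsubG S k G. \<forall>g\<in>carrier G. (f g \<in> C1 \<longrightarrow> g \<in> D) \<and> (f g \<in> C2 \<longrightarrow> g \<notin> D)))"

definition definable_flow :: "(nat \<Rightarrow> 'm list set set) \<Rightarrow> nat \<Rightarrow> 'm list monoid \<Rightarrow> 'x topology \<Rightarrow> ('m list \<Rightarrow> 'x \<Rightarrow> 'x) \<Rightarrow> bool" where
  "definable_flow S k G T act \<longleftrightarrow> G_flow G T act \<and>
     (\<forall>x\<in>topspace T. definable_map S k G T (\<lambda>g. act g x))"

text \<open>Minimal flow (flows are nonempty by convention).\<close>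

definition minimal_flow :: "('g, 'b) monoid_scheme \<Rightarrow> 'x topology \<Rightarrow> ('g \<Rightarrow> 'x \<Rightarrow> 'x) \<Rightarrow> bool" where
  "minimal_flow G T act \<longleftrightarrow> topspace T \<noteq> {} \<and>
     (\<forall>Y. closedin T Y \<and> Y \<noteq> {} \<and> (\<forall>g\<in>carrier G. \<forall>y\<in>Y. act g y \<in> Y) \<longrightarrow> Y = topspace T)"

text \<open>Proximal flow; nets are expressed by (proper) filters on G.\<close>

definition proximal_flow :: "('g, 'b) monoid_scheme \<Rightarrow> 'x topology \<Rightarrow> ('g \<Rightarrow> 'x \<Rightarrow> 'x) \<Rightarrow> bool" where
  "proximal_flow G T act \<longleftrightarrow>
     (\<forall>x\<in>topspace T. \<forall>y\<in>topspace T. \<exists>F z. F \<noteq> bot \<and> eventually (\<lambda>g. g \<in> carrier G) F \<and>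
        limitin T (\<lambda>g. act g x) z F \<and> limitin T (\<lambda>g. act g y) z F)"

text \<open>Flows are quantified over spaces whose points
live in the type 'm list set set; this type is large enough to contain a copy of
every minimal definable flow (which is a continuous image of S_G(M), whose points
are elements of 'm list set set).\<close>

definition def_strongly_amenable :: "(nat \<Rightarrow> 'm list set set) \<Rightarrow> nat \<Rightarrow> 'm list monoid \<Rightarrow> bool" where
  "def_strongly_amenable S k G \<longleftrightarrow>
     (\<forall>(T :: 'm list set set topology) act.
        definable_flow S k G T act \<and> minimal_flow G T act \<and> proximal_flow G T act
        \<longrightarrow> (\<exists>a. topspace T = {a}))"

definition def_amenable :: "(nat \<Rightarrow> 'm list set set) \<Rightarrow> nat \<Rightarrow> 'm list monoid \<Rightarrow> bool" where
  "def_amenable S k G \<longleftrightarrow>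
     (\<exists>\<mu>. keisler S k G \<mu> \<and> (\<forall>g\<in>carrier G. KM_act S k G g \<mu> = \<mu>))"

end

theory Submission imports Defs begin
lemma finite_chain_min:
  assumes "finite C" "C \<noteq> {}" "\<forall>A\<in>C. \<forall>B\<in>C. A \<subseteq> B \<or> B \<subseteq> A"
  shows "\<exists>M\<in>C. \<forall>A\<in>C. M \<subseteq> A"
  using assms
proof (induction C rule: finite_ne_induct)
  case (singleton x) then show ?case by auto
next
  case (insert x F)
  then obtain M where M: "M \<in> F" "\<forall>A\<in>F. M \<subseteq> A" by auto
  show ?case
  proof (cases "x \<subseteq> M")
    case True then show ?thesis using M by auto
  next
    case False then have "M \<subseteq> x" using insert.prems M by auto
    then show ?thesis using M by auto
  qed
qed

lemma zorn_min_closed: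
  assumes cpt: "compact_space T"
    and F0: "F0 \<in> \<F>"
    and cl: "\<And>F. F \<in> \<F> \<Longrightarrow> closedin T F \<and> F \<noteq> {}"
    and ch: "\<And>C. C \<subseteq> \<F> \<Longrightarrow> C \<noteq> {} \<Longrightarrow> (\<forall>A\<in>C. \<forall>B\<in>C. A \<subseteq> B \<or> B \<subseteq> A) \<Longrightarrow> \<Inter>C \<noteq> {} \<Longrightarrow> \<Inter>C \<in> \<F>"
  shows "\<exists>M\<in>\<F>. \<forall>F\<in>\<F>. F \<subseteq> M \<longrightarrow> F = M"
proof -
  have ne: "\<Inter>C \<noteq> {}" if hC: "C \<subseteq> \<F>" "C \<noteq> {}" "\<forall>A\<in>C. \<forall>B\<in>C. A \<subseteq> B \<or> B \<subseteq> A" for C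
  proof -
    have "\<forall>C'. finite C' \<and> C' \<subseteq> C \<longrightarrow> \<Inter>C' \<noteq> {}"
    proof (intro allI impI)
      fix C' assume C': "finite C' \<and> C' \<subseteq> C"
      show "\<Inter>C' \<noteq> {}"
      proof (cases "C' = {}")
        case True then show ?thesis by auto
      next
        case False
        then obtain M where M: "M \<in> C'" "\<forall>A\<in>C'. M \<subseteq> A"
        proof -
          have "\<forall>A\<in>C'. \<forall>B\<in>C'. A \<subseteq> B \<or> B \<subseteq> A" using C' hC(3) by (meson subsetD)
          then show ?thesis using finite_chain_min[of C'] C' False that by (meson)
        qed
        then have "\<Inter>C' = M" by auto
        moreover have "M \<in> \<F>" using M(1) C' hC(1) by auto
        ultimately show ?thesis using cl by metis
      qed
    qed
    moreover have "\<forall>A\<in>C. closedin T A" using hC(1) cl by (meson subsetD)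
    ultimately show ?thesis using cpt unfolding compact_space_fip by (metis (no_types, lifting))
  qed
  have sub: "\<And>F. F \<in> \<F> \<Longrightarrow> F \<subseteq> topspace T" using cl closedin_subset by metis
  define A where "A = (\<lambda>F. topspace T - F) ` \<F>"
  have "\<forall>C\<in>chains A. \<exists>U\<in>A. \<forall>X\<in>C. X \<subseteq> U"
  proof
    fix C assume C: "C \<in> chains A"
    have CA: "C \<subseteq> A" using C unfolding chains_def by simp
    have Cch: "\<And>X Y. X \<in> C \<Longrightarrow> Y \<in> C \<Longrightarrow> X \<subseteq> Y \<or> Y \<subseteq> X" using C chainsD by metis
    show "\<exists>U\<in>A. \<forall>X\<in>C. X \<subseteq> U"
    proof (cases "C = {}")
      case True then show ?thesis using F0 A_def by auto
    next
      case False
      define C' where "C' = {F \<in> \<F>. topspace T - F \<in> C}"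
      have C'sub: "C' \<subseteq> \<F>" using C'_def by auto
      have C'ne: "C' \<noteq> {}"
      proof -
        obtain X where "X \<in> C" using False by auto
        then obtain F where "F \<in> \<F>" "X = topspace T - F" using CA A_def by auto
        then show ?thesis using \<open>X \<in> C\<close> C'_def by auto
      qed
      have C'ch: "\<forall>X\<in>C'. \<forall>Y\<in>C'. X \<subseteq> Y \<or> Y \<subseteq> X"
      proof (intro ballI)
        fix X Y assume XY: "X \<in> C'" "Y \<in> C'"
        then have "topspace T - X \<subseteq> topspace T - Y \<or> topspace T - Y \<subseteq> topspace T - X"
          using Cch C'_def by auto
        moreover have "X \<subseteq> topspace T" "Y \<subseteq> topspace T" using XY C'_def sub by auto
        ultimately show "X \<subseteq> Y \<or> Y \<subseteq> X" by auto
      qed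
      have I: "\<Inter>C' \<in> \<F>" using ch[OF C'sub C'ne C'ch] ne[OF C'sub C'ne C'ch] by simp
      show ?thesis
      proof (intro bexI[of _ "topspace T - \<Inter>C'"] ballI)
        fix X assume "X \<in> C"
        then obtain F where "F \<in> \<F>" "X = topspace T - F" using CA A_def by auto
        then have "F \<in> C'" using C'_def \<open>X \<in> C\<close> by auto
        then show "X \<subseteq> topspace T - \<Inter>C'" using \<open>X = topspace T - F\<close> by auto
      next
        show "topspace T - \<Inter>C' \<in> A" using I A_def by auto
      qed
    qed
  qed
  from Zorn_Lemma2[OF this] obtain M where M: "M \<in> A" "\<forall>X\<in>A. M \<subseteq> X \<longrightarrow> X = M" by auto
  then obtain F where F: "F \<in> \<F>" "M = topspace T - F" using A_def by auto
  show ?thesis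
  proof (intro bexI[OF _ F(1)] ballI impI)
    fix F' assume F': "F' \<in> \<F>" "F' \<subseteq> F"
    have "topspace T - F' \<in> A" using F' A_def by auto
    moreover have "M \<subseteq> topspace T - F'" using F' F by auto
    ultimately have "topspace T - F' = topspace T - F" using M(2) F by auto
    then show "F' = F" using sub[OF F'(1)] sub[OF F(1)] by auto
  qed
qed
lemma fip_rule:
  assumes "compact_space T" "\<forall>C\<in>U. closedin T C" "\<forall>F'. finite F' \<and> F' \<subseteq> U \<longrightarrow> \<Inter>F' \<noteq> {}"
  shows "\<Inter>U \<noteq> {}"
  using assms unfolding compact_space_fip by blast

lemma compact_cluster:
  assumes cpt: "compact_space T" and Fnb: "F \<noteq> bot"
    and ev: "eventually (\<lambda>g. f g \<in> topspace T) F"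
  shows "\<exists>F' z. F' \<noteq> bot \<and> F' \<le> F \<and> limitin T f z F'"
proof -
  define cl where "cl P = T closure_of (f ` {g. P g \<and> f g \<in> topspace T})" for P
  define U where "U = cl ` {P. eventually P F}"
  have "\<Inter>U \<noteq> {}"
  proof -
    have "\<forall>C\<in>U. closedin T C" unfolding U_def cl_def by auto
    moreover have "\<forall>C'. finite C' \<and> C' \<subseteq> U \<longrightarrow> \<Inter>C' \<noteq> {}"
    proof (intro allI impI)
      fix C' assume C': "finite C' \<and> C' \<subseteq> U"
      then have "\<forall>E\<in>C'. \<exists>P. eventually P F \<and> E = cl P" unfolding U_def by auto
      then obtain PP where PP: "\<And>E. E \<in> C' \<Longrightarrow> eventually (PP E) F \<and> E = cl (PP E)" by metis
      have "eventually (\<lambda>g. \<forall>E\<in>C'. PP E g) F"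
        using C' PP by (intro eventually_ball_finite) auto
      then have "eventually (\<lambda>g. (\<forall>E\<in>C'. PP E g) \<and> f g \<in> topspace T) F"
        by (rule eventually_conj[OF _ ev])
      then obtain g where g: "\<forall>E\<in>C'. PP E g" "f g \<in> topspace T"
        using eventually_happens'[OF Fnb] by (metis (no_types, lifting))
      have "f g \<in> \<Inter>C'"
      proof
        fix E assume "E \<in> C'"
        then have "E = cl (PP E)" using PP by auto
        moreover have "f g \<in> f ` {x. PP E x \<and> f x \<in> topspace T}" using g \<open>E \<in> C'\<close> by auto
        ultimately show "f g \<in> E" unfolding cl_def
          using closure_of_subset[of "f ` {x. PP E x \<and> f x \<in> topspace T}" T] by auto
      qed
      then show "\<Inter>C' \<noteq> {}" by auto
    qed
    ultimately show ?thesis using fip_rule[OF cpt] by blast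
  qed
  then obtain z where z: "z \<in> \<Inter>U" by auto
  have zcl: "z \<in> cl P" if "eventually P F" for P using z that U_def by auto
  have ztop: "z \<in> topspace T" using zcl[of "\<lambda>_. True"] unfolding cl_def
    using closure_of_subset_topspace by fastforce
  have freq: "\<exists>g. P g \<and> f g \<in> V" if hP: "eventually P F" "openin T V" "z \<in> V" for P V
  proof -
    have "z \<in> cl P" using zcl hP by auto
    then obtain y where "y \<in> f ` {g. P g \<and> f g \<in> topspace T}" "y \<in> V"
      using hP unfolding cl_def in_closure_of by meson
    then show ?thesis by auto
  qed
  define B where "B = {(P, V). eventually P F \<and> openin T V \<and> z \<in> V}"
  define st where "st = (\<lambda>(P, V). {g. P g \<and> f g \<in> V})"
  define F' where "F' = (INF b\<in>B. principal (st b))"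
  have Bne: "B \<noteq> {}" using ztop unfolding B_def by (auto intro!: exI[of _ "\<lambda>_. True"] exI[of _ "topspace T"])
  have dir: "\<exists>x\<in>B. principal (st x) \<le> inf (principal (st a)) (principal (st b))"
    if "a \<in> B" "b \<in> B" for a b
  proof -
    obtain P1 V1 P2 V2 where ab: "a = (P1, V1)" "b = (P2, V2)" by fastforce
    then have h: "eventually P1 F" "openin T V1" "z \<in> V1" "eventually P2 F" "openin T V2" "z \<in> V2"
      using that B_def by auto
    show ?thesis
      by (rule bexI[of _ "(\<lambda>g. P1 g \<and> P2 g, V1 \<inter> V2)"])
         (use h ab in \<open>auto simp: B_def st_def intro: eventually_conj\<close>)
  qed
  have evF': "eventually Q F' \<longleftrightarrow> (\<exists>b\<in>B. eventually Q (principal (st b)))" for Q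
    unfolding F'_def using eventually_INF_base[OF Bne dir] by blast
  have "F' \<noteq> bot"
  proof
    assume "F' = bot"
    then have "eventually (\<lambda>_. False) F'" by simp
    then obtain b where b: "b \<in> B" "\<forall>x\<in>st b. False" using evF' eventually_principal by metis
    obtain P V where "b = (P, V)" by fastforce
    then show False using b freq unfolding B_def st_def by auto
  qed
  moreover have "F' \<le> F"
    unfolding le_filter_def
  proof (intro allI impI)
    fix Q assume "eventually Q F"
    then have "(Q, topspace T) \<in> B" using ztop B_def by auto
    then show "eventually Q F'" using evF' by (auto simp: eventually_principal st_def)
  qed
  moreover have "limitin T f z F'"
    unfolding limitin_def
  proof (intro conjI allI impI ztop)
    fix V assume "openin T V \<and> z \<in> V"
    then have "((\<lambda>_. True), V) \<in> B" using B_def by auto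
    then show "eventually (\<lambda>x. f x \<in> V) F'" using evF' by (auto simp: eventually_principal st_def)
  qed
  ultimately show ?thesis by blast
qed

lemma flow_transfer:
  fixes T :: "'x topology" and e :: "'x \<Rightarrow> 'y" and act :: "'m list \<Rightarrow> 'x \<Rightarrow> 'x"
  assumes inj: "inj_on e (topspace T)"
    and df: "definable_flow S k G T act" and mf: "minimal_flow G T act" and pf: "proximal_flow G T act"
  shows "\<exists>(T' :: 'y topology) act'. definable_flow S k G T' act' \<and> minimal_flow G T' act' \<and>
           proximal_flow G T' act' \<and> topspace T' = e ` topspace T"
proof -
  define A where "A = e ` topspace T"
  define r where "r = inv_into (topspace T) e"
  define T' where "T' = pullback_topology A r T"
  define act' where "act' g y = e (act g (r y))" for g y
  have re: "\<And>x. x \<in> topspace T \<Longrightarrow> r (e x) = x" using inj r_def by auto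
  have er: "\<And>y. y \<in> A \<Longrightarrow> e (r y) = y" using r_def A_def by (auto simp: f_inv_into_f)
  have rA: "\<And>y. y \<in> A \<Longrightarrow> r y \<in> topspace T" using r_def A_def by (auto simp: inv_into_into)
  have top': "topspace T' = A" unfolding T'_def topspace_pullback_topology using rA by auto
  have cr: "continuous_map T' T r"
    using continuous_map_pullback[OF continuous_map_id, of A r] unfolding T'_def by simp
  have ce: "continuous_map T T' e"
    unfolding T'_def
  proof (rule continuous_map_pullback')
    show "continuous_map T T (r \<circ> e)" by (rule continuous_map_eq[OF continuous_map_id]) (simp add: re)
    show "topspace T \<subseteq> e -` A" using A_def by auto
  qed
  have hm: "homeomorphic_maps T T' e r"
    unfolding homeomorphic_maps_def
  proof (intro conjI ballI cr ce)
    fix x assume "x \<in> topspace T" then show "r (e x) = x" by (rule re)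
  next
    fix y assume "y \<in> topspace T'" then show "e (r y) = y" using er top' by simp
  qed
  then have hs: "T homeomorphic_space T'" unfolding homeomorphic_space_def by blast
  have GF: "G_flow G T act" and dm: "\<forall>x\<in>topspace T. definable_map S k G T (\<lambda>g. act g x)"
    using df unfolding definable_flow_def by auto
  have actc: "\<And>g. g \<in> carrier G \<Longrightarrow> continuous_map T T (act g)" using GF unfolding G_flow_def by auto
  have acttop: "\<And>g x. g \<in> carrier G \<Longrightarrow> x \<in> topspace T \<Longrightarrow> act g x \<in> topspace T"
    using continuous_map_image_subset_topspace[OF actc] by blast
  have GF': "G_flow G T' act'"
    unfolding G_flow_def
  proof (intro conjI ballI)
    show "compact_space T'" using GF hs homeomorphic_compact_space unfolding G_flow_def by blast
    show "Hausdorff_space T'" using GF hs homeomorphic_Hausdorff_space unfolding G_flow_def by blast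
    fix g assume g: "g \<in> carrier G"
    have "continuous_map T' T' (e \<circ> act g \<circ> r)"
      using cr ce actc[OF g] by (intro continuous_map_compose) auto
    moreover have "act' g = e \<circ> act g \<circ> r" by (rule ext) (simp add: act'_def)
    ultimately show "continuous_map T' T' (act' g)" by simp
  next
    fix y assume "y \<in> topspace T'"
    then show "act' \<one>\<^bsub>G\<^esub> y = y" using GF top' rA er unfolding G_flow_def act'_def by auto
  next
    fix g h y assume gh: "g \<in> carrier G" "h \<in> carrier G" and y: "y \<in> topspace T'"
    then have ry: "r y \<in> topspace T" using top' rA by auto
    have "act' (g \<otimes>\<^bsub>G\<^esub> h) y = e (act g (act h (r y)))"
      using GF gh ry unfolding G_flow_def act'_def by auto
    also have "\<dots> = act' g (act' h y)" unfolding act'_def using re acttop[OF gh(2) ry] by simp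
    finally show "act' (g \<otimes>\<^bsub>G\<^esub> h) y = act' g (act' h y)" .
  qed
  have DF': "definable_flow S k G T' act'"
    unfolding definable_flow_def
  proof (intro conjI GF' ballI)
    fix y assume y: "y \<in> topspace T'"
    then have ry: "r y \<in> topspace T" using top' rA by auto
    show "definable_map S k G T' (\<lambda>g. act' g y)"
      unfolding definable_map_def
    proof (intro allI impI)
      fix C1 C2 assume C: "closedin T' C1 \<and> closedin T' C2 \<and> C1 \<inter> C2 = {}"
      define C1' where "C1' = {x \<in> topspace T. e x \<in> C1}"
      define C2' where "C2' = {x \<in> topspace T. e x \<in> C2}"
      have "closedin T C1'" "closedin T C2'" "C1' \<inter> C2' = {}"
        using C closedin_continuous_map_preimage[OF ce] C1'_def C2'_def by auto
      then obtain D where D: "D \<in> defsubG S k G"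
        "\<forall>g\<in>carrier G. (act g (r y) \<in> C1' \<longrightarrow> g \<in> D) \<and> (act g (r y) \<in> C2' \<longrightarrow> g \<notin> D)"
        using dm ry unfolding definable_map_def by blast
      show "\<exists>D\<in>defsubG S k G. \<forall>g\<in>carrier G. (act' g y \<in> C1 \<longrightarrow> g \<in> D) \<and> (act' g y \<in> C2 \<longrightarrow> g \<notin> D)"
        using D acttop[OF _ ry] unfolding act'_def C1'_def C2'_def by auto
    qed
  qed
  have MF': "minimal_flow G T' act'"
    unfolding minimal_flow_def
  proof (intro conjI allI impI)
    show "topspace T' \<noteq> {}" using mf top' A_def unfolding minimal_flow_def by auto
    fix Y assume Y: "closedin T' Y \<and> Y \<noteq> {} \<and> (\<forall>g\<in>carrier G. \<forall>y\<in>Y. act' g y \<in> Y)"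
    define Y' where "Y' = {x \<in> topspace T. e x \<in> Y}"
    have YA: "Y \<subseteq> A" using Y closedin_subset top' by metis
    have "closedin T Y'" using Y closedin_continuous_map_preimage[OF ce] Y'_def by auto
    moreover have "Y' \<noteq> {}"
    proof -
      obtain y where "y \<in> Y" using Y by auto
      then have "r y \<in> Y'" using YA rA er Y'_def by auto
      then show ?thesis by auto
    qed
    moreover have "\<forall>g\<in>carrier G. \<forall>x\<in>Y'. act g x \<in> Y'"
    proof (intro ballI)
      fix g x assume g: "g \<in> carrier G" and x: "x \<in> Y'"
      then have "act' g (e x) \<in> Y" using Y Y'_def by auto
      then show "act g x \<in> Y'" unfolding act'_def Y'_def using re x Y'_def acttop[OF g] by auto
    qed
    ultimately have "Y' = topspace T" using mf unfolding minimal_flow_def by blast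
    then show "Y = topspace T'" using YA top' A_def Y'_def by auto
  qed
  have PF': "proximal_flow G T' act'"
    unfolding proximal_flow_def
  proof (intro ballI)
    fix y1 y2 assume y: "y1 \<in> topspace T'" "y2 \<in> topspace T'"
    then have ry: "r y1 \<in> topspace T" "r y2 \<in> topspace T" using top' rA by auto
    then obtain F z where Fz: "F \<noteq> bot" "eventually (\<lambda>g. g \<in> carrier G) F"
        "limitin T (\<lambda>g. act g (r y1)) z F" "limitin T (\<lambda>g. act g (r y2)) z F"
      using pf unfolding proximal_flow_def by blast
    have "limitin T' (e \<circ> (\<lambda>g. act g (r y1))) (e z) F" "limitin T' (e \<circ> (\<lambda>g. act g (r y2))) (e z) F"
      using continuous_map_limit[OF ce] Fz by auto
    then show "\<exists>F z. F \<noteq> bot \<and> eventually (\<lambda>g. g \<in> carrier G) F \<and>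
        limitin T' (\<lambda>g. act' g y1) z F \<and> limitin T' (\<lambda>g. act' g y2) z F"
      using Fz unfolding act'_def o_def by blast
  qed
  show ?thesis using DF' MF' PF' top' A_def by blast
qed

lemma cvx_bound:
  fixes t a b :: real
  assumes "0 \<le> t" "t \<le> 1" "0 \<le> a \<and> a \<le> 1" "0 \<le> b \<and> b \<le> 1"
  shows "0 \<le> t * a + (1 - t) * b \<and> t * a + (1 - t) * b \<le> 1"
proof -
  have "t * a \<le> t" using assms by (simp add: mult_left_le)
  moreover have "(1 - t) * b \<le> 1 - t" using assms by (simp add: mult_left_le)
  ultimately show ?thesis using assms by simp
qed

lemma cc_undef: "(t::real) * u + (1 - t) * u = u"
  by (simp add: algebra_simps)

locale KMc =
  fixes S :: "nat \<Rightarrow> 'm list set set" and k :: nat and G :: "'m list monoid"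
  assumes fo: "fo_structure S" and dg: "definable_group S k G"
    and df: "definable_flow S k G (KM_top S k G) (KM_act S k G)"
begin

abbreviation "T \<equiv> KM_top S k G"
abbreviation "act \<equiv> KM_act S k G"
abbreviation "D \<equiv> defsubG S k G"

definition cc :: "real \<Rightarrow> ('m list set \<Rightarrow> real) \<Rightarrow> ('m list set \<Rightarrow> real) \<Rightarrow> ('m list set \<Rightarrow> real)" where
  "cc t a b = (\<lambda>X. t * a X + (1 - t) * b X)"

lemma grp: "group G" using dg unfolding definable_group_def by auto

lemma topT: "topspace T = {\<mu>. keisler S k G \<mu>} \<inter> (\<Pi>\<^sub>E X\<in>D. {0..1})"
  unfolding KM_top_def by auto

lemma top_ext: "\<mu> \<in> topspace T \<Longrightarrow> X \<notin> D \<Longrightarrow> \<mu> X = undefined"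
  unfolding topT by (auto simp: PiE_def extensional_def)

lemma top_val: "\<mu> \<in> topspace T \<Longrightarrow> X \<in> D \<Longrightarrow> 0 \<le> \<mu> X \<and> \<mu> X \<le> 1"
  unfolding topT by (auto simp: PiE_def Pi_def)

lemma top_keisler: "\<mu> \<in> topspace T \<Longrightarrow> keisler S k G \<mu>"
  unfolding topT by auto

lemma GF: "G_flow G T act" using df unfolding definable_flow_def by auto

lemma cpt: "compact_space T" using GF unfolding G_flow_def by auto
lemma haus: "Hausdorff_space T" using GF unfolding G_flow_def by auto
lemma actc: "g \<in> carrier G \<Longrightarrow> continuous_map T T (act g)" using GF unfolding G_flow_def by auto
lemma acttop: "g \<in> carrier G \<Longrightarrow> \<mu> \<in> topspace T \<Longrightarrow> act g \<mu> \<in> topspace T"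
  using continuous_map_image_subset_topspace[OF actc] by blast
lemma act_one: "\<mu> \<in> topspace T \<Longrightarrow> act \<one>\<^bsub>G\<^esub> \<mu> = \<mu>" using GF unfolding G_flow_def by auto
lemma act_mult: "g \<in> carrier G \<Longrightarrow> h \<in> carrier G \<Longrightarrow> \<mu> \<in> topspace T \<Longrightarrow>
   act (g \<otimes>\<^bsub>G\<^esub> h) \<mu> = act g (act h \<mu>)" using GF unfolding G_flow_def by auto

lemma cc_top:
  assumes a: "a \<in> topspace T" and b: "b \<in> topspace T" and t: "0 \<le> t" "t \<le> 1"
  shows "cc t a b \<in> topspace T"
proof -
  have ka: "keisler S k G a" and kb: "keisler S k G b" using a b top_keisler by auto
  have eq: "\<And>X. X \<notin> D \<Longrightarrow> cc t a b X = undefined"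
    using a b top_ext cc_undef unfolding cc_def by metis
  have "keisler S k G (cc t a b)"
    unfolding keisler_def
  proof (intro conjI ballI impI)
    show "cc t a b \<in> extensional D" using eq by (auto simp: extensional_def)
    show "cc t a b (carrier G) = 1" using ka kb unfolding keisler_def cc_def by simp
    fix A assume A: "A \<in> D"
    show "0 \<le> cc t a b A" using cvx_bound[OF t top_val[OF a A] top_val[OF b A]] unfolding cc_def by simp
  next
    fix A B assume "A \<in> D" "B \<in> D" "A \<inter> B = {}"
    then have "a (A \<union> B) = a A + a B" "b (A \<union> B) = b A + b B" using ka kb unfolding keisler_def by auto
    then show "cc t a b (A \<union> B) = cc t a b A + cc t a b B" unfolding cc_def by (simp add: algebra_simps)
  qed
  moreover have "cc t a b \<in> (\<Pi>\<^sub>E X\<in>D. {0..1})"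
    using eq cvx_bound[OF t top_val[OF a] top_val[OF b]] unfolding cc_def by (auto simp: PiE_def extensional_def Pi_def)
  ultimately show ?thesis unfolding topT by auto
qed

lemma act_cc:
  assumes a: "a \<in> topspace T" and b: "b \<in> topspace T"
  shows "act g (cc t a b) = cc t (act g a) (act g b)"
proof
  fix X show "act g (cc t a b) X = cc t (act g a) (act g b) X"
    unfolding KM_act_def cc_def by (cases "X \<in> D") (simp_all add: cc_undef)
qed

lemma coord_cont:
  assumes X: "X \<in> D"
  shows "continuous_map T euclideanreal (\<lambda>\<mu>. \<mu> X)"
proof -
  have "continuous_map (product_topology (\<lambda>_. top_of_set {0..1::real}) D) (top_of_set {0..1}) (\<lambda>\<mu>. \<mu> X)"
    by (rule continuous_map_product_projection) (rule X)
  then have "continuous_map (product_topology (\<lambda>_. top_of_set {0..1::real}) D) euclideanreal (\<lambda>\<mu>. \<mu> X)"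
    by (rule continuous_map_into_fulltopology)
  then show ?thesis unfolding KM_top_def by (rule continuous_map_from_subtopology)
qed

end
lemma sq_cvx:
  fixes t a b :: real
  assumes "0 \<le> t" "t \<le> 1"
  shows "(t * a + (1 - t) * b)^2 \<le> t * a^2 + (1 - t) * b^2"
proof -
  have "t * a^2 + (1 - t) * b^2 - (t * a + (1 - t) * b)^2 = t * (1 - t) * (a - b)^2"
    by (simp add: power2_eq_square algebra_simps)
  moreover have "0 \<le> t * (1 - t) * (a - b)^2" using assms by simp
  ultimately show ?thesis by linarith
qed

context KMc begin

definition cvx :: "('m list set \<Rightarrow> real) set \<Rightarrow> bool" where
  "cvx C \<longleftrightarrow> (\<forall>a\<in>C. \<forall>b\<in>C. \<forall>t. 0 \<le> t \<and> t \<le> 1 \<longrightarrow> cc t a b \<in> C)"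

definition inv_set :: "('m list set \<Rightarrow> real) set \<Rightarrow> bool" where
  "inv_set C \<longleftrightarrow> (\<forall>g\<in>carrier G. \<forall>a\<in>C. act g a \<in> C)"

lemma carrier_D: "carrier G \<in> D"
  using dg unfolding definable_group_def defsubG_def by auto

lemma D_Un: "A \<in> D \<Longrightarrow> B \<in> D \<Longrightarrow> A \<union> B \<in> D"
  using fo unfolding fo_structure_def defsubG_def by auto

lemma top_ne: "topspace T \<noteq> {}"
proof -
  define \<delta> where "\<delta> = (\<lambda>A. if A \<in> D then (if \<one>\<^bsub>G\<^esub> \<in> A then 1 else 0) else undefined :: real)"
  have one: "\<one>\<^bsub>G\<^esub> \<in> carrier G" using grp by (simp add: group.is_monoid monoid.one_closed)
  have "keisler S k G \<delta>"
    unfolding keisler_def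
  proof (intro conjI ballI impI)
    show "\<delta> \<in> extensional D" unfolding \<delta>_def extensional_def by auto
    show "\<delta> (carrier G) = 1" unfolding \<delta>_def using carrier_D one by auto
    fix A assume "A \<in> D" then show "0 \<le> \<delta> A" unfolding \<delta>_def by auto
  next
    fix A B assume AB: "A \<in> D" "B \<in> D" "A \<inter> B = {}"
    then have "A \<union> B \<in> D" using D_Un by auto
    then show "\<delta> (A \<union> B) = \<delta> A + \<delta> B" unfolding \<delta>_def using AB by auto
  qed
  moreover have "\<delta> \<in> (\<Pi>\<^sub>E X\<in>D. {0..1})" unfolding \<delta>_def by (auto simp: PiE_def extensional_def)
  ultimately show ?thesis unfolding topT by auto
qed

lemma Q_exists:
  "\<exists>Q. closedin T Q \<and> Q \<noteq> {} \<and> cvx Q \<and> inv_set Q \<and>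
     (\<forall>C. closedin T C \<and> C \<noteq> {} \<and> cvx C \<and> inv_set C \<and> C \<subseteq> Q \<longrightarrow> C = Q)"
proof -
  define FF where "FF = {C. closedin T C \<and> C \<noteq> {} \<and> cvx C \<and> inv_set C}"
  have "topspace T \<in> FF"
    unfolding FF_def cvx_def inv_set_def using top_ne cc_top acttop by auto
  moreover have "\<And>C. C \<in> FF \<Longrightarrow> closedin T C \<and> C \<noteq> {}" unfolding FF_def by auto
  moreover have "\<Inter>CH \<in> FF" if "CH \<subseteq> FF" "CH \<noteq> {}" "\<Inter>CH \<noteq> {}" for CH
  proof -
    have "closedin T (\<Inter>CH)" using that FF_def by (intro closedin_Inter) auto
    moreover have "cvx (\<Inter>CH)" using that(1) unfolding FF_def cvx_def by auto
    moreover have "inv_set (\<Inter>CH)" using that(1) unfolding FF_def inv_set_def by auto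
    ultimately show ?thesis using that(3) FF_def by auto
  qed
  ultimately obtain Q where "Q \<in> FF" "\<forall>F\<in>FF. F \<subseteq> Q \<longrightarrow> F = Q"
    using zorn_min_closed[OF cpt, of "topspace T" FF] by metis
  then show ?thesis unfolding FF_def by auto
qed

lemma X_exists:
  assumes "closedin T Q" "Q \<noteq> {}" "inv_set Q"
  shows "\<exists>X. closedin T X \<and> X \<noteq> {} \<and> X \<subseteq> Q \<and> inv_set X \<and>
     (\<forall>C. closedin T C \<and> C \<noteq> {} \<and> inv_set C \<and> C \<subseteq> X \<longrightarrow> C = X)"
proof -
  define FF where "FF = {C. closedin T C \<and> C \<noteq> {} \<and> C \<subseteq> Q \<and> inv_set C}"
  have "Q \<in> FF" unfolding FF_def using assms by auto
  moreover have "\<And>C. C \<in> FF \<Longrightarrow> closedin T C \<and> C \<noteq> {}" unfolding FF_def by auto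
  moreover have "\<Inter>CH \<in> FF" if "CH \<subseteq> FF" "CH \<noteq> {}" "\<Inter>CH \<noteq> {}" for CH
  proof -
    have "closedin T (\<Inter>CH)" using that FF_def by (intro closedin_Inter) auto
    moreover have "inv_set (\<Inter>CH)" using that(1) unfolding FF_def inv_set_def by auto
    moreover have "\<Inter>CH \<subseteq> Q" using that(1,2) unfolding FF_def by auto
    ultimately show ?thesis using that(3) FF_def by auto
  qed
  ultimately obtain X where "X \<in> FF" "\<forall>F\<in>FF. F \<subseteq> X \<longrightarrow> F = X"
    using zorn_min_closed[OF cpt, of Q FF] by metis
  then have X: "closedin T X" "X \<noteq> {}" "X \<subseteq> Q" "inv_set X"
    and M: "\<And>C. C \<in> FF \<Longrightarrow> C \<subseteq> X \<Longrightarrow> C = X" unfolding FF_def by auto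
  show ?thesis
  proof (intro exI[of _ X] conjI X allI impI)
    fix C assume "closedin T C \<and> C \<noteq> {} \<and> inv_set C \<and> C \<subseteq> X"
    then show "C = X" using M X(3) unfolding FF_def by auto
  qed
qed

end
lemma lin_aux:
  fixes S1 A1 B1 M1 s1 d1 :: real
  shows "S1 = (A1 + B1) / 2 - M1 \<Longrightarrow> A1 \<le> s1 \<Longrightarrow> B1 \<le> s1 \<Longrightarrow> s1 - d1 < M1 \<Longrightarrow> S1 < d1"
  by (simp add: field_simps)

context KMc begin

definition Phi :: "'m list set set \<Rightarrow> 'm list \<Rightarrow> ('m list set \<Rightarrow> real) \<Rightarrow> real" where
  "Phi L h q = (\<Sum>X\<in>L. (act h q X)^2)"

lemma Phi_cont:
  assumes L: "finite L" "L \<subseteq> D" and h: "h \<in> carrier G"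
  shows "continuous_map T euclideanreal (Phi L h)"
proof -
  have "continuous_map T euclideanreal (\<lambda>q. (act h q X)^2)" if X: "X \<in> L" for X
  proof -
    have "continuous_map T euclideanreal ((\<lambda>\<mu>. \<mu> X) \<circ> act h)"
      using continuous_map_compose[OF actc[OF h] coord_cont] X L by auto
    then have c: "continuous_map T euclideanreal (\<lambda>q. act h q X)" by (simp add: o_def)
    have "continuous_map T euclideanreal (\<lambda>q. act h q X * act h q X)"
      by (rule continuous_map_real_mult[OF c c])
    then show ?thesis by (simp add: power2_eq_square)
  qed
  then have "continuous_map T euclideanreal (\<lambda>q. \<Sum>X\<in>L. (act h q X)^2)"
    using L(1) by (intro continuous_map_sum) auto
  then show ?thesis unfolding Phi_def by (simp add: fun_eq_iff)
qed

lemma term_bound: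
  assumes "X \<in> D" "h \<in> carrier G" "q \<in> topspace T"
  shows "0 \<le> act h q X \<and> act h q X \<le> 1"
  using top_val[OF acttop[OF assms(2,3)] assms(1)] .

lemma Phi_bound:
  assumes L: "finite L" "L \<subseteq> D" and h: "h \<in> carrier G" and q: "q \<in> topspace T"
  shows "0 \<le> Phi L h q \<and> Phi L h q \<le> real (card L)"
proof -
  have t: "0 \<le> (act h q X)^2 \<and> (act h q X)^2 \<le> 1" if "X \<in> L" for X
    using term_bound[of X h q] that L h q by (auto intro: power_le_one)
  have "Phi L h q \<le> real (card L) * 1"
    unfolding Phi_def by (rule sum_bounded_above) (use t in auto)
  moreover have "0 \<le> Phi L h q" unfolding Phi_def by (rule sum_nonneg) (use t in auto)
  ultimately show ?thesis by simp
qed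

lemma Phi_act:
  assumes "h \<in> carrier G" "g \<in> carrier G" "q \<in> topspace T"
  shows "Phi L h (act g q) = Phi L (h \<otimes>\<^bsub>G\<^esub> g) q"
  unfolding Phi_def using act_mult[OF assms] by simp

lemma Phi_cc:
  assumes L: "finite L" "L \<subseteq> D" and h: "h \<in> carrier G" and a: "a \<in> topspace T" and b: "b \<in> topspace T"
    and t: "0 \<le> t" "t \<le> 1"
  shows "Phi L h (cc t a b) \<le> t * Phi L h a + (1 - t) * Phi L h b"
proof -
  have "Phi L h (cc t a b) = (\<Sum>X\<in>L. (t * act h a X + (1 - t) * act h b X)^2)"
    unfolding Phi_def act_cc[OF a b] unfolding cc_def by simp
  also have "\<dots> \<le> (\<Sum>X\<in>L. t * (act h a X)^2 + (1 - t) * (act h b X)^2)"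
    by (rule sum_mono) (rule sq_cvx[OF t])
  also have "\<dots> = t * Phi L h a + (1 - t) * Phi L h b"
    unfolding Phi_def by (simp add: sum.distrib sum_distrib_left)
  finally show ?thesis .
qed

lemma key:
  assumes Qc: "closedin T Q" and Qne: "Q \<noteq> {}" and Qcvx: "cvx Q" and Qinv: "inv_set Q"
    and Qmin: "\<forall>C. closedin T C \<and> C \<noteq> {} \<and> cvx C \<and> inv_set C \<and> C \<subseteq> Q \<longrightarrow> C = Q"
    and x: "x \<in> Q" and y: "y \<in> Q" and L: "finite L" "L \<subseteq> D" and eps: "0 < \<epsilon>"
  shows "\<exists>g\<in>carrier G. \<forall>X\<in>L. \<bar>act g x X - act g y X\<bar> < \<epsilon>"
proof -
  have QT: "Q \<subseteq> topspace T" using Qc closedin_subset by metis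
  have one: "\<one>\<^bsub>G\<^esub> \<in> carrier G" using grp by (simp add: group.is_monoid monoid.one_closed)
  have mulc: "\<And>a b. a \<in> carrier G \<Longrightarrow> b \<in> carrier G \<Longrightarrow> a \<otimes>\<^bsub>G\<^esub> b \<in> carrier G"
    using grp by (simp add: group.is_monoid monoid.m_closed)
  define m where "m = cc (1/2) x y"
  have mQ: "m \<in> Q" using Qcvx x y unfolding cvx_def m_def by auto
  have mT: "m \<in> topspace T" using mQ QT by auto
  define s where "s L' h = Sup ((\<lambda>g. Phi L' h (act g m)) ` carrier G)" for L' h
  have bdd: "bdd_above ((\<lambda>g. Phi L' h (act g m)) ` carrier G)"
    if "finite L'" "L' \<subseteq> D" "h \<in> carrier G" for L' h
    using Phi_bound[OF that acttop[OF _ mT]] by (auto intro!: bdd_aboveI[of _ "real (card L')"])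
  have sup_ge: "Phi L' h (act g m) \<le> s L' h"
    if "finite L'" "L' \<subseteq> D" "h \<in> carrier G" "g \<in> carrier G" for L' h g
    unfolding s_def by (rule cSup_upper) (use that bdd in auto)
  define Q' where "Q' = {q \<in> Q. \<forall>L' h. finite L' \<and> L' \<subseteq> D \<and> h \<in> carrier G \<longrightarrow> Phi L' h q \<le> s L' h}"
  have mQ': "m \<in> Q'"
    unfolding Q'_def
  proof (intro CollectI conjI allI impI mQ)
    fix L' h assume a: "finite L' \<and> L' \<subseteq> D \<and> h \<in> carrier G"
    have "Phi L' h m = Phi L' h (act \<one>\<^bsub>G\<^esub> m)" using act_one[OF mT] by simp
    also have "\<dots> \<le> s L' h" using sup_ge a one by auto
    finally show "Phi L' h m \<le> s L' h" .
  qed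
  have Q'c: "closedin T Q'"
  proof -
    define I where "I = {(L', h). finite L' \<and> L' \<subseteq> D \<and> h \<in> carrier G}"
    define Z where "Z = (\<lambda>(L', h). {q \<in> topspace T. Phi L' h q \<in> {..s L' h}})"
    have "Q' = Q \<inter> \<Inter>(Z ` I)"
      unfolding Q'_def Z_def I_def using QT by auto
    moreover have "closedin T (\<Inter>(Z ` I))"
    proof (rule closedin_Inter)
      show "Z ` I \<noteq> {}" unfolding I_def using one by auto
      show "\<And>Y. Y \<in> Z ` I \<Longrightarrow> closedin T Y"
      proof -
        fix Y assume "Y \<in> Z ` I"
        then obtain L' h where Lh: "finite L'" "L' \<subseteq> D" "h \<in> carrier G" "Y = Z (L', h)"
          unfolding I_def by auto
        have "closedin euclideanreal {..s L' h}" by simp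
        then show "closedin T Y" unfolding Lh(4) Z_def
          using closedin_continuous_map_preimage[OF Phi_cont[OF Lh(1-3)], of "{..s L' h}"] by simp
      qed
    qed
    ultimately show ?thesis using Qc by (simp add: closedin_Int)
  qed
  have Q'cvx: "cvx Q'"
    unfolding cvx_def
  proof (intro ballI allI impI)
    fix a b and t :: real assume ab: "a \<in> Q'" "b \<in> Q'" and t: "0 \<le> t \<and> t \<le> 1"
    then have aQ: "a \<in> Q" and bQ: "b \<in> Q" unfolding Q'_def by auto
    have "cc t a b \<in> Q" using Qcvx aQ bQ t unfolding cvx_def by auto
    moreover have "Phi L' h (cc t a b) \<le> s L' h" if Lh: "finite L' \<and> L' \<subseteq> D \<and> h \<in> carrier G" for L' h
    proof -
      have "Phi L' h (cc t a b) \<le> t * Phi L' h a + (1 - t) * Phi L' h b"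
        using Phi_cc[of L' h a b t] Lh aQ bQ QT t by auto
      also have "\<dots> \<le> t * s L' h + (1 - t) * s L' h"
        using ab Lh t unfolding Q'_def by (intro add_mono mult_left_mono) auto
      finally show ?thesis by (simp add: algebra_simps)
    qed
    ultimately show "cc t a b \<in> Q'" unfolding Q'_def by auto
  qed
  have Q'inv: "inv_set Q'"
    unfolding inv_set_def
  proof (intro ballI)
    fix g0 q assume g0: "g0 \<in> carrier G" and q: "q \<in> Q'"
    then have qQ: "q \<in> Q" and qT: "q \<in> topspace T" using QT unfolding Q'_def by auto
    have "act g0 q \<in> Q" using Qinv g0 qQ unfolding inv_set_def by auto
    moreover have "Phi L' h (act g0 q) \<le> s L' h" if Lh: "finite L'" "L' \<subseteq> D" "h \<in> carrier G" for L' h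
    proof -
      have hg: "h \<otimes>\<^bsub>G\<^esub> g0 \<in> carrier G" using mulc Lh g0 by auto
      have "Phi L' h (act g0 q) = Phi L' (h \<otimes>\<^bsub>G\<^esub> g0) q" using Phi_act[OF Lh(3) g0 qT] .
      also have "\<dots> \<le> s L' (h \<otimes>\<^bsub>G\<^esub> g0)" using q Lh hg unfolding Q'_def by auto
      also have "\<dots> \<le> s L' h"
        unfolding s_def
      proof (rule cSup_least)
        show "(\<lambda>g. Phi L' (h \<otimes>\<^bsub>G\<^esub> g0) (act g m)) ` carrier G \<noteq> {}" using one by auto
        fix v assume "v \<in> (\<lambda>g. Phi L' (h \<otimes>\<^bsub>G\<^esub> g0) (act g m)) ` carrier G"
        then obtain g where g: "g \<in> carrier G" "v = Phi L' (h \<otimes>\<^bsub>G\<^esub> g0) (act g m)" by auto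
        have gm: "act g m \<in> topspace T" using acttop[OF g(1) mT] .
        have "v = Phi L' h (act g0 (act g m))" using g(2) Phi_act[OF Lh(3) g0 gm] by simp
        also have "\<dots> = Phi L' h (act (g0 \<otimes>\<^bsub>G\<^esub> g) m)" using act_mult[OF g0 g(1) mT] by simp
        also have "\<dots> \<le> Sup ((\<lambda>g. Phi L' h (act g m)) ` carrier G)"
          using sup_ge[OF Lh mulc[OF g0 g(1)]] unfolding s_def .
        finally show "v \<le> Sup ((\<lambda>g. Phi L' h (act g m)) ` carrier G)" .
      qed
      finally show ?thesis .
    qed
    ultimately show "act g0 q \<in> Q'" unfolding Q'_def by auto
  qed
  have Q'sub: "Q' \<subseteq> Q" unfolding Q'_def by auto
  have Q'ne: "Q' \<noteq> {}" using mQ' by auto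
  have QQ: "Q' = Q"
    using Qmin[rule_format, of Q'] Q'c Q'cvx Q'inv Q'sub Q'ne by simp
  have bnd: "Phi L \<one>\<^bsub>G\<^esub> q \<le> s L \<one>\<^bsub>G\<^esub>" if "q \<in> Q" for q
  proof -
    have "q \<in> Q'" using that QQ by simp
    then show ?thesis using L one unfolding Q'_def by auto
  qed
  define \<delta> where "\<delta> = \<epsilon>^2 / 4"
  have dpos: "0 < \<delta>" unfolding \<delta>_def using eps by simp
  have "s L \<one>\<^bsub>G\<^esub> - \<delta> < Sup ((\<lambda>g. Phi L \<one>\<^bsub>G\<^esub> (act g m)) ` carrier G)"
    using dpos unfolding s_def by simp
  then obtain v where "v \<in> (\<lambda>g. Phi L \<one>\<^bsub>G\<^esub> (act g m)) ` carrier G" "s L \<one>\<^bsub>G\<^esub> - \<delta> < v"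
    using less_cSupD[of "(\<lambda>g. Phi L \<one>\<^bsub>G\<^esub> (act g m)) ` carrier G"] one by blast
  then obtain g where g: "g \<in> carrier G" "Phi L \<one>\<^bsub>G\<^esub> (act g m) > s L \<one>\<^bsub>G\<^esub> - \<delta>" by auto
  have xT: "act g x \<in> topspace T" and yT: "act g y \<in> topspace T"
    using acttop g(1) x y QT by auto
  have xQ: "act g x \<in> Q" and yQ: "act g y \<in> Q" using Qinv g(1) x y unfolding inv_set_def by auto
  define a where "a X = act g x X" for X
  define b where "b X = act g y X" for X
  have Pa: "(\<Sum>X\<in>L. (a X)^2) \<le> s L \<one>\<^bsub>G\<^esub>" using bnd[OF xQ] act_one[OF xT] unfolding Phi_def a_def by simp
  have Pb: "(\<Sum>X\<in>L. (b X)^2) \<le> s L \<one>\<^bsub>G\<^esub>" using bnd[OF yQ] act_one[OF yT] unfolding Phi_def b_def by simp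
  have "act g m = cc (1/2) (act g x) (act g y)" unfolding m_def using x y QT by (intro act_cc) auto
  then have "Phi L \<one>\<^bsub>G\<^esub> (act g m) = (\<Sum>X\<in>L. ((a X + b X) / 2)^2)"
    using act_one[OF cc_top[OF xT yT, of "1/2"]] unfolding Phi_def cc_def a_def b_def
    by (simp add: add_divide_distrib)
  then have Pm: "(\<Sum>X\<in>L. ((a X + b X) / 2)^2) > s L \<one>\<^bsub>G\<^esub> - \<delta>" using g(2) by simp
  have ident: "((a X - b X) / 2)^2 = ((a X)^2 + (b X)^2) / 2 - ((a X + b X) / 2)^2" for X
    by (simp add: power2_eq_square field_simps)
  have "(\<Sum>X\<in>L. ((a X - b X) / 2)^2) = ((\<Sum>X\<in>L. (a X)^2) + (\<Sum>X\<in>L. (b X)^2)) / 2 - (\<Sum>X\<in>L. ((a X + b X) / 2)^2)"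
  proof -
    have h2: "(\<Sum>X\<in>L. ((a X)^2 + (b X)^2) / 2) = ((\<Sum>X\<in>L. (a X)^2) + (\<Sum>X\<in>L. (b X)^2)) / 2"
      by (simp add: sum_divide_distrib[symmetric] sum.distrib)
    show ?thesis unfolding ident sum_subtractf h2 by simp
  qed
  then have sumlt: "(\<Sum>X\<in>L. ((a X - b X) / 2)^2) < \<delta>" using Pa Pb Pm by (rule lin_aux)
  show ?thesis
  proof (intro bexI[OF _ g(1)] ballI)
    fix X assume XL: "X \<in> L"
    have "((a X - b X) / 2)^2 \<le> (\<Sum>X\<in>L. ((a X - b X) / 2)^2)"
      by (rule member_le_sum) (use XL L in auto)
    then have "((a X - b X) / 2)^2 < (\<epsilon> / 2)^2" using sumlt \<delta>_def by (simp add: power_divide)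
    then have "\<bar>(a X - b X) / 2\<bar>^2 < (\<epsilon> / 2)^2" by (simp only: power2_abs)
    then have "\<bar>(a X - b X) / 2\<bar> < \<epsilon> / 2"
      by (rule power2_less_imp_less) (use eps in simp)
    then show "\<bar>act g x X - act g y X\<bar> < \<epsilon>" unfolding a_def b_def by simp
  qed
qed

end
context KMc begin

lemma prox:
  assumes Qc: "closedin T Q" and Qne: "Q \<noteq> {}" and Qcvx: "cvx Q" and Qinv: "inv_set Q"
    and Qmin: "\<forall>C. closedin T C \<and> C \<noteq> {} \<and> cvx C \<and> inv_set C \<and> C \<subseteq> Q \<longrightarrow> C = Q"
    and x: "x \<in> Q" and y: "y \<in> Q"
  shows "\<exists>F z. F \<noteq> bot \<and> eventually (\<lambda>g. g \<in> carrier G) F \<and>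
           limitin T (\<lambda>g. act g x) z F \<and> limitin T (\<lambda>g. act g y) z F"
proof -
  have QT: "Q \<subseteq> topspace T" using Qc closedin_subset by metis
  have xT: "x \<in> topspace T" and yT: "y \<in> topspace T" using x y QT by auto
  define B where "B = {(L, e::real). finite L \<and> L \<subseteq> D \<and> 0 < e}"
  define st where "st = (\<lambda>(L, e::real). {g \<in> carrier G. \<forall>X\<in>L. \<bar>act g x X - act g y X\<bar> < e})"
  define F0 where "F0 = (INF b\<in>B. principal (st b))"
  have Bne: "B \<noteq> {}" unfolding B_def by (auto intro!: exI[of _ "{}"] exI[of _ 1])
  have dir: "\<exists>c\<in>B. principal (st c) \<le> inf (principal (st a)) (principal (st b))"
    if "a \<in> B" "b \<in> B" for a b
  proof -
    obtain L1 e1 L2 e2 where ab: "a = (L1, e1)" "b = (L2, e2)" by fastforce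
    then have h: "finite L1" "L1 \<subseteq> D" "0 < e1" "finite L2" "L2 \<subseteq> D" "0 < e2"
      using that B_def by auto
    show ?thesis
      by (rule bexI[of _ "(L1 \<union> L2, min e1 e2)"]) (use h ab in \<open>auto simp: B_def st_def\<close>)
  qed
  have evF0: "eventually P F0 \<longleftrightarrow> (\<exists>b\<in>B. eventually P (principal (st b)))" for P
    unfolding F0_def using eventually_INF_base[OF Bne dir] by blast
  have F0nb: "F0 \<noteq> bot"
  proof
    assume "F0 = bot"
    then have "eventually (\<lambda>_. False) F0" by simp
    then obtain b where b: "b \<in> B" "\<forall>g\<in>st b. False" using evF0 eventually_principal by metis
    obtain L e where Le: "b = (L, e)" by fastforce
    then have "finite L" "L \<subseteq> D" "0 < e" using b B_def by auto
    then obtain g where "g \<in> carrier G" "\<forall>X\<in>L. \<bar>act g x X - act g y X\<bar> < e"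
      using key[OF Qc Qne Qcvx Qinv Qmin x y] by blast
    then show False using b Le st_def by auto
  qed
  have evc: "eventually (\<lambda>g. g \<in> carrier G) F0"
  proof -
    have "({}, 1) \<in> B" unfolding B_def by auto
    moreover have "eventually (\<lambda>g. g \<in> carrier G) (principal (st ({}, 1)))"
      unfolding st_def by (auto simp: eventually_principal)
    ultimately show ?thesis using evF0 by blast
  qed
  have evs: "eventually (\<lambda>g. \<bar>act g x X - act g y X\<bar> < e) F0" if "X \<in> D" "0 < e" for X e
  proof -
    have "({X}, e) \<in> B" unfolding B_def using that by auto
    moreover have "eventually (\<lambda>g. \<bar>act g x X - act g y X\<bar> < e) (principal (st ({X}, e)))"
      unfolding st_def by (auto simp: eventually_principal)
    ultimately show ?thesis using evF0 by blast
  qed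
  define f where "f g = (act g x, act g y)" for g
  have cpt2: "compact_space (prod_topology T T)" using cpt compact_space_prod_topology by blast
  have evf: "eventually (\<lambda>g. f g \<in> topspace (prod_topology T T)) F0"
    using evc by eventually_elim (simp add: f_def acttop xT yT)
  obtain F' z where F': "F' \<noteq> bot" "F' \<le> F0" "limitin (prod_topology T T) f z F'"
    using compact_cluster[OF cpt2 F0nb evf] by blast
  have l1: "limitin T (\<lambda>g. act g x) (fst z) F'" and l2: "limitin T (\<lambda>g. act g y) (snd z) F'"
    using F'(3) unfolding limitin_pairwise f_def by (auto simp: o_def)
  have z1T: "fst z \<in> topspace T" and z2T: "snd z \<in> topspace T" using l1 l2 limitin_topspace by metis+
  have "fst z = snd z"
  proof
    fix X show "fst z X = snd z X"
    proof (cases "X \<in> D")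
      case False then show ?thesis using top_ext z1T z2T by metis
    next
      case True
      have t1: "((\<lambda>g. act g x X) \<longlongrightarrow> fst z X) F'"
        using continuous_map_limit[OF coord_cont[OF True] l1] by (simp add: o_def)
      have t2: "((\<lambda>g. act g y X) \<longlongrightarrow> snd z X) F'"
        using continuous_map_limit[OF coord_cont[OF True] l2] by (simp add: o_def)
      have ta: "((\<lambda>g. act g x X - act g y X) \<longlongrightarrow> fst z X - snd z X) F'"
        by (rule tendsto_diff[OF t1 t2])
      have tb: "((\<lambda>g. act g x X - act g y X) \<longlongrightarrow> 0) F'"
        unfolding tendsto_iff
      proof (intro allI impI)
        fix e :: real assume "0 < e"
        then have "eventually (\<lambda>g. \<bar>act g x X - act g y X\<bar> < e) F'"
          using filter_leD[OF F'(2) evs[OF True]] by blast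
        then show "eventually (\<lambda>g. dist (act g x X - act g y X) 0 < e) F'" by (simp add: dist_real_def)
      qed
      have "fst z X - snd z X = 0" using tendsto_unique[OF F'(1) ta tb] .
      then show ?thesis by simp
    qed
  qed
  then have "limitin T (\<lambda>g. act g y) (fst z) F'" using l2 by simp
  moreover have "eventually (\<lambda>g. g \<in> carrier G) F'" using filter_leD[OF F'(2) evc] .
  ultimately show ?thesis using F'(1) l1 by blast
qed

end
lemma E_inj:
  assumes "\<forall>x\<in>A. length x = k" "\<forall>x\<in>A'. length x = k"
    and eq: "A \<union> {replicate (k + 1 + n) a} = A' \<union> {replicate (k + 1 + n') a}"
  shows "A = A' \<and> n = n'"
proof -
  have gen0: "{x \<in> B \<union> {r}. length x = k} = B" if "\<forall>x\<in>B. length x = k" "length r \<noteq> k" for B r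
    using that by auto
  have gen: "{x \<in> B \<union> {replicate (k + 1 + m) a}. length x = k} = B" if "\<forall>x\<in>B. length x = k" for B m
    by (rule gen0[OF that]) simp
  have "A = {x \<in> A \<union> {replicate (k + 1 + n) a}. length x = k}" using gen[OF assms(1)] by simp
  also have "\<dots> = {x \<in> A' \<union> {replicate (k + 1 + n') a}. length x = k}" using eq by simp
  also have "\<dots> = A'" using gen[OF assms(2)] by simp
  finally have AA: "A = A'" .
  have "replicate (k + 1 + n) a \<in> A' \<union> {replicate (k + 1 + n') a}" using eq by blast
  moreover have "length (replicate (k + 1 + n) a) \<noteq> k" by simp
  then have "replicate (k + 1 + n) a \<notin> A'" using assms(2) by metis
  ultimately have "replicate (k + 1 + n) a = replicate (k + 1 + n') a" by blast
  then have "n = n'" by (metis add_left_cancel length_replicate)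
  then show ?thesis using AA by auto
qed

context KMc begin

lemma D_len: "A \<in> D \<Longrightarrow> \<forall>x\<in>A. length x = k"
proof -
  assume A: "A \<in> D"
  have "carrier G \<in> S k" using dg unfolding definable_group_def by auto
  moreover have "S k \<subseteq> Pow {x. length x = k}" using fo unfolding fo_structure_def by auto
  ultimately have "carrier G \<subseteq> {x. length x = k}" by auto
  moreover have "A \<subseteq> carrier G" using A unfolding defsubG_def by auto
  ultimately show ?thesis by auto
qed

definition enc :: "('m list set \<Rightarrow> real) \<Rightarrow> 'm list set set" where
  "enc \<mu> = {A \<union> {replicate (k + 1 + n) undefined} | A n. A \<in> D \<and> real_of_rat (from_nat n) < \<mu> A}"

lemma enc_inj: "inj_on enc (topspace T)"
proof (rule inj_onI)
  have main: "False" if a: "a \<in> topspace T" and b: "b \<in> topspace T" and eq: "enc a = enc b"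
    and A: "A \<in> D" and lt: "a A < b A" for a b A
  proof -
    obtain q where q: "a A < real_of_rat q" "real_of_rat q < b A" using of_rat_dense[OF lt] by blast
    define n where "n = to_nat q"
    have fq: "from_nat n = q" unfolding n_def by simp
    have "A \<union> {replicate (k + 1 + n) undefined} \<in> enc b" unfolding enc_def using A q fq by auto
    then have "A \<union> {replicate (k + 1 + n) undefined} \<in> enc a" using eq by simp
    then obtain A' n' where A': "A' \<in> D" "real_of_rat (from_nat n') < a A'"
      "A \<union> {replicate (k + 1 + n) undefined} = A' \<union> {replicate (k + 1 + n') undefined}"
      unfolding enc_def by blast
    then have "A = A' \<and> n = n'" using E_inj[OF D_len[OF A] D_len[OF A'(1)]] by blast
    then show False using A'(2) q fq by auto
  qed
  fix a b assume a: "a \<in> topspace T" and b: "b \<in> topspace T" and eq: "enc a = enc b"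
  show "a = b"
  proof
    fix A show "a A = b A"
    proof (cases "A \<in> D")
      case False then show ?thesis using top_ext a b by metis
    next
      case True
      show ?thesis
      proof (rule ccontr)
        assume "a A \<noteq> b A"
        then have "a A < b A \<or> b A < a A" by auto
        then show False using main[OF a b eq True] main[OF b a eq[symmetric] True] by blast
      qed
    qed
  qed
qed

lemma sub_flow:
  assumes Xc: "closedin T X" and Xne: "X \<noteq> {}" and Xinv: "inv_set X"
    and Xmin: "\<forall>C. closedin T C \<and> C \<noteq> {} \<and> inv_set C \<and> C \<subseteq> X \<longrightarrow> C = X"
    and Xprox: "\<And>x y. x \<in> X \<Longrightarrow> y \<in> X \<Longrightarrow> \<exists>F z. F \<noteq> bot \<and> eventually (\<lambda>g. g \<in> carrier G) F \<and>
           limitin T (\<lambda>g. act g x) z F \<and> limitin T (\<lambda>g. act g y) z F"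
  shows "definable_flow S k G (subtopology T X) act \<and> minimal_flow G (subtopology T X) act \<and>
         proximal_flow G (subtopology T X) act"
proof -
  have XT: "X \<subseteq> topspace T" using Xc closedin_subset by metis
  have topX: "topspace (subtopology T X) = X" using XT by (simp add: Int_absorb1)
  have actX: "\<And>g x. g \<in> carrier G \<Longrightarrow> x \<in> X \<Longrightarrow> act g x \<in> X" using Xinv unfolding inv_set_def by auto
  have dm: "\<forall>x\<in>topspace T. definable_map S k G T (\<lambda>g. act g x)"
    using df unfolding definable_flow_def by auto
  have GFX: "G_flow G (subtopology T X) act"
    unfolding G_flow_def topX
  proof (intro conjI ballI)
    show "compact_space (subtopology T X)"
      by (rule compact_space_subtopology[OF closedin_compact_space[OF cpt Xc]])
    show "Hausdorff_space (subtopology T X)" by (rule Hausdorff_space_subtopology[OF haus])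
    fix g assume g: "g \<in> carrier G"
    show "continuous_map (subtopology T X) (subtopology T X) (act g)"
      unfolding continuous_map_in_subtopology
      using continuous_map_from_subtopology[OF actc[OF g]] actX[OF g] topX by auto
  next
    fix x assume "x \<in> X" then show "act \<one>\<^bsub>G\<^esub> x = x" using act_one XT by auto
  next
    fix g h x assume "g \<in> carrier G" "h \<in> carrier G" "x \<in> X"
    then show "act (g \<otimes>\<^bsub>G\<^esub> h) x = act g (act h x)" using act_mult XT by auto
  qed
  have DFX: "definable_flow S k G (subtopology T X) act"
    unfolding definable_flow_def
  proof (intro conjI GFX ballI)
    fix x assume "x \<in> topspace (subtopology T X)"
    then have x: "x \<in> topspace T" using topX XT by auto
    show "definable_map S k G (subtopology T X) (\<lambda>g. act g x)"
      unfolding definable_map_def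
    proof (intro allI impI)
      fix C1 C2 assume C: "closedin (subtopology T X) C1 \<and> closedin (subtopology T X) C2 \<and> C1 \<inter> C2 = {}"
      then have "closedin T C1" "closedin T C2" using closedin_trans_full Xc by metis+
      then show "\<exists>D\<in>D. \<forall>g\<in>carrier G. (act g x \<in> C1 \<longrightarrow> g \<in> D) \<and> (act g x \<in> C2 \<longrightarrow> g \<notin> D)"
        using dm x C unfolding definable_map_def by blast
    qed
  qed
  have MFX: "minimal_flow G (subtopology T X) act"
    unfolding minimal_flow_def topX
  proof (intro conjI allI impI Xne)
    fix Y assume Y: "closedin (subtopology T X) Y \<and> Y \<noteq> {} \<and> (\<forall>g\<in>carrier G. \<forall>y\<in>Y. act g y \<in> Y)"
    then have "closedin T Y" using closedin_trans_full Xc by metis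
    moreover have "Y \<subseteq> X" using Y closedin_subset topX by metis
    ultimately show "Y = X" using Xmin Y unfolding inv_set_def by auto
  qed
  have PFX: "proximal_flow G (subtopology T X) act"
    unfolding proximal_flow_def topX
  proof (intro ballI)
    fix x y assume xy: "x \<in> X" "y \<in> X"
    then obtain F z where Fz: "F \<noteq> bot" "eventually (\<lambda>g. g \<in> carrier G) F"
      "limitin T (\<lambda>g. act g x) z F" "limitin T (\<lambda>g. act g y) z F" using Xprox by blast
    have ex: "eventually (\<lambda>g. act g x \<in> X) F" using Fz(2) by eventually_elim (use actX xy in auto)
    have ey: "eventually (\<lambda>g. act g y \<in> X) F" using Fz(2) by eventually_elim (use actX xy in auto)
    have zX: "z \<in> X" using limitin_closedin[OF Fz(3) Xc ex] Fz(1) by auto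
    show "\<exists>F z. F \<noteq> bot \<and> eventually (\<lambda>g. g \<in> carrier G) F \<and>
        limitin (subtopology T X) (\<lambda>g. act g x) z F \<and> limitin (subtopology T X) (\<lambda>g. act g y) z F"
      using Fz zX ex ey unfolding limitin_subtopology by blast
  qed
  show ?thesis using DFX MFX PFX by blast
qed

lemma amen:
  assumes sa: "def_strongly_amenable S k G"
  shows "def_amenable S k G"
proof -
  obtain Q where QQ: "closedin T Q \<and> Q \<noteq> {} \<and> cvx Q \<and> inv_set Q \<and>
     (\<forall>C. closedin T C \<and> C \<noteq> {} \<and> cvx C \<and> inv_set C \<and> C \<subseteq> Q \<longrightarrow> C = Q)"
    using Q_exists ..
  then have Q: "closedin T Q" "Q \<noteq> {}" "cvx Q" "inv_set Q"
    and Qmin: "\<forall>C. closedin T C \<and> C \<noteq> {} \<and> cvx C \<and> inv_set C \<and> C \<subseteq> Q \<longrightarrow> C = Q"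
    by auto
  obtain X where XX: "closedin T X \<and> X \<noteq> {} \<and> X \<subseteq> Q \<and> inv_set X \<and>
     (\<forall>C. closedin T C \<and> C \<noteq> {} \<and> inv_set C \<and> C \<subseteq> X \<longrightarrow> C = X)"
    using X_exists[OF Q(1,2,4)] ..
  then have X: "closedin T X" "X \<noteq> {}" "X \<subseteq> Q" "inv_set X"
    and Xmin: "\<forall>C. closedin T C \<and> C \<noteq> {} \<and> inv_set C \<and> C \<subseteq> X \<longrightarrow> C = X"
    by auto
  have XT: "X \<subseteq> topspace T" using X(1) closedin_subset by metis
  have topX: "topspace (subtopology T X) = X" using XT by (simp add: Int_absorb1)
  have fl: "definable_flow S k G (subtopology T X) act \<and> minimal_flow G (subtopology T X) act \<and>
         proximal_flow G (subtopology T X) act"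
  proof (rule sub_flow[OF X(1,2,4) Xmin])
    fix x y assume xy: "x \<in> X" "y \<in> X"
    then have "x \<in> Q" "y \<in> Q" using X(3) by auto
    then show "\<exists>F z. F \<noteq> bot \<and> eventually (\<lambda>g. g \<in> carrier G) F \<and>
           limitin T (\<lambda>g. act g x) z F \<and> limitin T (\<lambda>g. act g y) z F"
      by (rule prox[OF Q Qmin])
  qed
  have inj: "inj_on enc (topspace (subtopology T X))"
    using inj_on_subset[OF enc_inj XT] topX by simp
  have ex: "\<exists>(T' :: 'm list set set topology) act'. definable_flow S k G T' act' \<and> minimal_flow G T' act' \<and>
           proximal_flow G T' act' \<and> topspace T' = enc ` topspace (subtopology T X)"
    by (rule flow_transfer[OF inj, of S k G act]) (use fl in simp_all)
  then obtain T' :: "'m list set set topology" and act' where T':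
    "definable_flow S k G T' act'" "minimal_flow G T' act'" "proximal_flow G T' act'"
    "topspace T' = enc ` topspace (subtopology T X)"
    by (elim exE conjE)
  have "\<exists>a. topspace T' = {a}"
    using sa[unfolded def_strongly_amenable_def, rule_format, of T' act'] T'(1-3) by simp
  then obtain a where "topspace T' = {a}" ..
  then have encXa: "enc ` X = {a}" using T'(4) topX by simp
  have encX: "enc \<nu> = a" if "\<nu> \<in> X" for \<nu>
  proof -
    have "enc \<nu> \<in> enc ` X" using that by (rule imageI)
    then show ?thesis using encXa by simp
  qed
  obtain \<mu> where \<mu>: "\<mu> \<in> X" using X(2) by auto
  have injX: "inj_on enc X" using inj topX by simp
  have X1: "X = {\<mu>}"
  proof
    show "{\<mu>} \<subseteq> X" using \<mu> by simp
    show "X \<subseteq> {\<mu>}"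
    proof
      fix \<nu> assume \<nu>: "\<nu> \<in> X"
      then have "enc \<nu> = enc \<mu>" using encX \<mu> by simp
      then show "\<nu> \<in> {\<mu>}" using inj_onD[OF injX _ \<nu> \<mu>] by simp
    qed
  qed
  show ?thesis
    unfolding def_amenable_def
  proof (intro exI[of _ \<mu>] conjI ballI)
    show "keisler S k G \<mu>" using X1 XT top_keisler by auto
    fix g assume "g \<in> carrier G"
    then show "act g \<mu> = \<mu>" using X(4) X1 unfolding inv_set_def by auto
  qed
qed

end

theorem mainTheorem16:
  fixes S :: "nat \<Rightarrow> 'm list set set" and k :: nat and G :: "'m list monoid"
  assumes "fo_structure S"
    and "definable_group S k G"
    and "all_types_definable S k G"
    and "definable_flow S k G (KM_top S k G) (KM_act S k G)"
    and "def_strongly_amenable S k G"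
  shows "def_amenable S k G"
proof -
  interpret KMc S k G using assms(1,2,4) by unfold_locales
  show ?thesis using amen[OF assms(5)] .
qed
end
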